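(* Let $\|\cdot\|$ be a strictly convex norm on $\mathbb{R}^n$ that is continuously differentiable on $\mathbb{R}^n\setminus\{0\}$, with gradient $N(x)$ at $x\ne0$, and set $h(x,y)=\|y\|-\langle y,N(x)\rangle$ for $x\ne0$. (1) Suppose there are constants $T,r>0$ such that $h(x,x+2y)\le T h(x,x+y)$ whenever $x\ne0$, $\|y\|\le r\|x\|$ and $\langle y,N(x)\rangle=0$. Then there is a constant $T'$ such that $h(x,x+2y)\le T' h(x,x+y)$ for all $x\neq 0$ and all $y$ with $\langle y,N(x)\rangle=0$. (2) Suppose there are constants $r,K>0$ such that $h(x,x+y)\le K h(x,x-y)$ whenever $x\ne0$, $\|y\|\le r\|x\|$ and $\langle y,N(x)\rangle=0$. Then there is a constant $K'$ such that $h(x,x+y)\le K' h(x,x-y)$ for all $x\ne0$ and all $y$ with $\langle y,N(x)\rangle=0$.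
   Context: $\langle\cdot,\cdot\rangle$ is the Euclidean inner product. Strict convexity of the norm means: if $x,y\neq0$ and $\|x+y\|=\|x\|+\|y\|$, then $y=\alpha x$ for some $\alpha>0$. The hypothesis of (1) is called "doubling in the tangent plane", that of (2) "balanced in the tangent plane". *)

theory Defs
  imports "HOL-Analysis.Analysis"
begin

definition is_norm :: "('a::real_vector \<Rightarrow> real) \<Rightarrow> bool" where
  "is_norm f \<longleftrightarrow> (\<forall>x. f x \<ge> 0) \<and> (\<forall>x. f x = 0 \<longleftrightarrow> x = 0)
     \<and> (\<forall>c x. f (c *\<^sub>R x) = \<bar>c\<bar> * f x) \<and> (\<forall>x y. f (x + y) \<le> f x + f y)"

definition strictly_convex_norm :: "('a::real_vector \<Rightarrow> real) \<Rightarrow> bool" where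
  "strictly_convex_norm f \<longleftrightarrow> is_norm f \<and>
     (\<forall>x y. x \<noteq> 0 \<longrightarrow> y \<noteq> 0 \<longrightarrow> f (x + y) = f x + f y \<longrightarrow> (\<exists>\<alpha>>0. y = \<alpha> *\<^sub>R x))"

definition hfun :: "('a::real_inner \<Rightarrow> real) \<Rightarrow> ('a \<Rightarrow> 'a) \<Rightarrow> 'a \<Rightarrow> 'a \<Rightarrow> real" where
  "hfun nrm N x y = nrm y - inner y (N x)"

end

theory Submission imports Defs begin

lemma nrm_basic:
  assumes "is_norm nrm"
  shows "\<And>x. nrm x \<ge> 0" "\<And>x. nrm x = 0 \<longleftrightarrow> x = 0"
    "\<And>c x. nrm (c *\<^sub>R x) = \<bar>c\<bar> * nrm x" "\<And>x y. nrm (x + y) \<le> nrm x + nrm y"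
  using assms unfolding is_norm_def by auto

lemma nrm_minus: assumes "is_norm nrm" shows "nrm (- x) = nrm x"
  using nrm_basic(3)[OF assms, of "-1" x] by simp

lemma nrm_conv:
  assumes "is_norm nrm" "0 \<le> t" "t \<le> 1"
  shows "nrm ((1 - t) *\<^sub>R x + t *\<^sub>R y) \<le> (1 - t) * nrm x + t * nrm y"
proof -
  have "nrm ((1 - t) *\<^sub>R x + t *\<^sub>R y) \<le> nrm ((1 - t) *\<^sub>R x) + nrm (t *\<^sub>R y)"
    by (rule nrm_basic(4)[OF assms(1)])
  also have "\<dots> = (1 - t) * nrm x + t * nrm y"
    using assms by (simp add: nrm_basic(3)[OF assms(1)])
  finally show ?thesis .
qed

lemma nrm_convex: assumes "is_norm nrm" shows "convex_on UNIV nrm"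
  by (rule convex_onI) (auto intro: nrm_conv[OF assms])

lemma nrm_cont: assumes "is_norm (nrm :: 'a::euclidean_space \<Rightarrow> real)" shows "continuous_on UNIV nrm"
  by (rule convex_on_continuous[OF open_UNIV nrm_convex[OF assms]])

lemma subgrad:
  fixes nrm :: "'a::euclidean_space \<Rightarrow> real"
  assumes n: "is_norm nrm" and g: "(nrm has_derivative (\<lambda>v. inner v Nx)) (at x)"
  shows "nrm x + inner v Nx \<le> nrm (x + v)"
proof (rule ccontr)
  assume nt: "\<not> ?thesis"
  define D where "D = nrm (x + v) - nrm x"
  have lt: "D < inner v Nx" using nt by (simp add: D_def)
  have d1: "((\<lambda>t::real. x + t *\<^sub>R v) has_derivative (\<lambda>t. t *\<^sub>R v)) (at 0)"
    by (auto intro!: derivative_eq_intros)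
  have "((\<lambda>t. nrm (x + t *\<^sub>R v)) has_derivative (\<lambda>t. inner (t *\<^sub>R v) Nx)) (at 0)"
    using has_derivative_compose[OF d1, of nrm "\<lambda>v. inner v Nx"] g by simp
  then have "((\<lambda>t. nrm (x + t *\<^sub>R v)) has_derivative (*) (inner v Nx)) (at 0)"
    by (simp add: mult.commute[of _ "inner v Nx"])
  then have "DERIV (\<lambda>t. nrm (x + t *\<^sub>R v)) 0 :> inner v Nx"
    by (simp add: has_field_derivative_def)
  then have "DERIV (\<lambda>t. nrm (x + t *\<^sub>R v) - t * D) 0 :> inner v Nx - D"
    by (auto intro!: derivative_eq_intros)
  from DERIV_pos_inc_right[OF this] lt obtain d where d: "d > 0"
    and H: "\<And>h. h > 0 \<Longrightarrow> h < d \<Longrightarrow> nrm x < nrm (x + h *\<^sub>R v) - h * D" by auto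
  define h where "h = min (d/2) (1/2)"
  have h: "h > 0" "h < d" "h \<le> 1" using d by (auto simp: h_def)
  have "nrm (x + h *\<^sub>R v) = nrm ((1 - h) *\<^sub>R x + h *\<^sub>R (x + v))"
    by (simp add: algebra_simps)
  also have "\<dots> \<le> (1 - h) * nrm x + h * nrm (x + v)" using h by (intro nrm_conv[OF n]) auto
  finally have "nrm (x + h *\<^sub>R v) - h * D \<le> nrm x" by (simp add: D_def algebra_simps)
  with H[OF h(1,2)] show False by simp
qed


lemma ratio_mono:
  assumes n: "is_norm nrm" and s: "0 < s" "s \<le> \<tau>"
  shows "\<tau> / s * (nrm (u + s *\<^sub>R w) - nrm u) \<le> nrm (u + \<tau> *\<^sub>R w) - nrm u"
proof -
  have t: "\<tau> > 0" using s by simp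
  have "u + s *\<^sub>R w = (1 - s/\<tau>) *\<^sub>R u + (s/\<tau>) *\<^sub>R (u + \<tau> *\<^sub>R w)"
    using t by (simp add: algebra_simps)
  then have "nrm (u + s *\<^sub>R w) \<le> (1 - s/\<tau>) * nrm u + (s/\<tau>) * nrm (u + \<tau> *\<^sub>R w)"
    using nrm_conv[OF n, of "s/\<tau>" u "u + \<tau> *\<^sub>R w"] s t by simp
  then have "nrm (u + s *\<^sub>R w) - nrm u \<le> (s/\<tau>) * (nrm (u + \<tau> *\<^sub>R w) - nrm u)"
    by (simp add: algebra_simps)
  then have "\<tau> / s * (nrm (u + s *\<^sub>R w) - nrm u) \<le> \<tau> / s * ((s/\<tau>) * (nrm (u + \<tau> *\<^sub>R w) - nrm u))"
    using s t by (intro mult_left_mono) auto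
  also have "\<dots> = nrm (u + \<tau> *\<^sub>R w) - nrm u" using s t by simp
  finally show ?thesis .
qed

lemma pos_gap:
  fixes nrm :: "'a::euclidean_space \<Rightarrow> real"
  assumes sc: "strictly_convex_norm nrm" and u: "u \<noteq> 0" and w: "w \<noteq> 0" and s: "s > 0"
    and tan: "\<forall>t. nrm u \<le> nrm (u + t *\<^sub>R w)"
  shows "nrm u < nrm (u + s *\<^sub>R w)"
proof (rule ccontr)
  have n: "is_norm nrm" using sc by (simp add: strictly_convex_norm_def)
  note nb = nrm_basic[OF n]
  assume "\<not> nrm u < nrm (u + s *\<^sub>R w)"
  with tan have eq: "nrm (u + s *\<^sub>R w) = nrm u" by (metis order.antisym not_less)
  have "u + (u + s *\<^sub>R w) = 2 *\<^sub>R (u + (s/2) *\<^sub>R w)" by (simp add: algebra_simps scaleR_2)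
  then have "nrm (u + (u + s *\<^sub>R w)) = 2 * nrm (u + (s/2) *\<^sub>R w)" by (simp add: nb(3))
  then have ge: "nrm (u + (u + s *\<^sub>R w)) \<ge> nrm u + nrm (u + s *\<^sub>R w)" using tan eq by force
  have eq2: "nrm (u + (u + s *\<^sub>R w)) = nrm u + nrm (u + s *\<^sub>R w)" using ge nb(4) by (meson order.antisym)
  have nz: "u + s *\<^sub>R w \<noteq> 0" using eq u nb(2) by metis
  obtain \<alpha> where a: "\<alpha> > 0" "u + s *\<^sub>R w = \<alpha> *\<^sub>R u"
    using sc eq2 u nz unfolding strictly_convex_norm_def by blast
  then have sw: "s *\<^sub>R w = (\<alpha> - 1) *\<^sub>R u" by (simp add: algebra_simps)
  show False
  proof (cases "\<alpha> = 1")
    case True then show False using sw s w by simp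
  next
    case False
    have "u + (- s/(\<alpha> - 1)) *\<^sub>R w = u + (- 1/(\<alpha> - 1)) *\<^sub>R (s *\<^sub>R w)" by simp
    also have "\<dots> = 0" using False by (simp add: sw)
    finally have "nrm u \<le> nrm 0" using tan[rule_format, of "- s/(\<alpha> - 1)"] by simp
    then have "nrm u \<le> 0" using nb(2)[of 0] by simp
    then show False using nb(1,2) u by (meson order.antisym)
  qed
qed


lemma key:
  fixes nrm :: "'a::euclidean_space \<Rightarrow> real"
  assumes sc: "strictly_convex_norm nrm" and r: "r > 0"
  shows "\<exists>c>0. \<forall>x y. x \<noteq> 0 \<and> (\<forall>t. nrm x \<le> nrm (x + t *\<^sub>R y)) \<and> r * nrm x < nrm y
            \<longrightarrow> c * nrm y \<le> nrm (x + y) - nrm x"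
proof -
  have n: "is_norm nrm" using sc by (simp add: strictly_convex_norm_def)
  note nb = nrm_basic[OF n]
  have nc: "continuous_on UNIV nrm" by (rule nrm_cont[OF n])
  define K' where "K' = {p::'a\<times>'a. \<forall>t. nrm (fst p) \<le> nrm (fst p + t *\<^sub>R snd p)}"
  define K where "K = (sphere 0 1 \<times> sphere 0 1) \<inter> K'"
  have "closed K'" unfolding K'_def
    by (intro closed_Collect_all closed_Collect_le continuous_on_compose2[OF nc] continuous_intros) auto
  then have cK: "compact K" unfolding K_def
    by (intro compact_Int_closed compact_Times compact_sphere)
  define g where "g p = (nrm (fst p + (r * nrm (fst p) / nrm (snd p)) *\<^sub>R snd p) - nrm (fst p)) / nrm (fst p)" for p
  have Knz: "fst p \<noteq> 0" "snd p \<noteq> 0" if "p \<in> K" for p using that by (auto simp: K_def)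
  have gcont: "continuous_on K g" unfolding g_def
    apply (intro continuous_intros continuous_on_compose2[OF nc])
    using Knz nb(2) by auto
  have gpos: "g p > 0" if "p \<in> K" for p
  proof -
    obtain u w where p: "p = (u, w)" by fastforce
    have uw: "u \<noteq> 0" "w \<noteq> 0" using Knz[OF that] p by auto
    have s: "r * nrm u / nrm w > 0" using uw r nb(1,2) by (simp add: order.strict_iff_order)
    have tan: "\<forall>t. nrm u \<le> nrm (u + t *\<^sub>R w)" using that p by (auto simp: K_def K'_def)
    have "nrm u < nrm (u + (r * nrm u / nrm w) *\<^sub>R w)" by (rule pos_gap[OF sc uw s tan])
    moreover have "nrm u > 0" using uw nb(1,2) by (simp add: order.strict_iff_order)
    ultimately show ?thesis by (simp add: g_def p)
  qed
  obtain m where m: "m > 0" "\<And>p. p \<in> K \<Longrightarrow> m \<le> g p"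
  proof (cases "K = {}")
    case True then show ?thesis using that[of 1] by auto
  next
    case False
    from compact_attains_inf[OF compact_continuous_image[OF gcont cK]] False
    obtain p0 where "p0 \<in> K" "\<And>p. p \<in> K \<Longrightarrow> g p0 \<le> g p" by fastforce
    then show ?thesis using that[of "g p0"] gpos by blast
  qed
  show ?thesis
  proof (intro exI[of _ "m / r"] conjI allI impI)
    show "m / r > 0" using m r by simp
    fix x y assume H: "x \<noteq> 0 \<and> (\<forall>t. nrm x \<le> nrm (x + t *\<^sub>R y)) \<and> r * nrm x < nrm y"
    have nx: "nrm x > 0" using H nb(1,2) by (simp add: order.strict_iff_order)
    have ny: "nrm y > 0" using H nx r by (smt (verit) mult_pos_pos)
    then have y0: "y \<noteq> 0" using nb(2)[of 0] by auto
    define a where "a = norm x"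
    define b where "b = norm y"
    have a: "a > 0" and b: "b > 0" using H y0 by (auto simp: a_def b_def)
    define u where "u = (1/a) *\<^sub>R x"
    define w where "w = (1/b) *\<^sub>R y"
    have xu: "x = a *\<^sub>R u" and yw: "y = b *\<^sub>R w" using a b by (auto simp: u_def w_def)
    have nu: "nrm x = a * nrm u" and nw: "nrm y = b * nrm w" using a b xu yw nb(3) by auto
    have tan: "nrm u \<le> nrm (u + t *\<^sub>R w)" for t
    proof -
      have "u + t *\<^sub>R w = (1/a) *\<^sub>R (x + (t * a / b) *\<^sub>R y)"
        using a b by (simp add: u_def w_def algebra_simps)
      then have "nrm (u + t *\<^sub>R w) = (1/a) * nrm (x + (t * a / b) *\<^sub>R y)" using a by (simp add: nb(3))
      moreover have "nrm x \<le> nrm (x + (t * a / b) *\<^sub>R y)" using H by blast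
      ultimately have "a * nrm u \<le> a * nrm (u + t *\<^sub>R w)" using a nu by (simp add: divide_simps mult.commute)
      then show ?thesis using a by simp
    qed
    have pK: "(u, w) \<in> K" unfolding K_def K'_def using a b tan
      by (auto simp: u_def w_def a_def b_def)
    define s where "s = r * nrm u / nrm w"
    define \<tau> where "\<tau> = b / a"
    have nu0: "nrm u > 0" and nw0: "nrm w > 0" using nu nw nx ny a b
      by (auto simp: zero_less_mult_iff)
    have s0: "s > 0" using r nu0 nw0 by (simp add: s_def)
    have "r * nrm u < \<tau> * nrm w" using H nu nw a by (simp add: \<tau>_def field_simps)
    then have st: "s \<le> \<tau>" using nw0 by (simp add: s_def field_simps)
    have g: "m \<le> (nrm (u + s *\<^sub>R w) - nrm u) / nrm u" using m(2)[OF pK] by (simp add: g_def s_def)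
    have rm: "\<tau> / s * (nrm (u + s *\<^sub>R w) - nrm u) \<le> nrm (u + \<tau> *\<^sub>R w) - nrm u"
      by (rule ratio_mono[OF n s0 st])
    have "\<tau> / s * (m * nrm u) \<le> \<tau> / s * (nrm (u + s *\<^sub>R w) - nrm u)"
      using g nu0 s0 st by (intro mult_left_mono) (auto simp: field_simps)
    also have "\<tau> / s * (m * nrm u) = m * nrm y / (r * a)"
      using nu0 nw0 r a b by (simp add: s_def \<tau>_def nw field_simps)
    finally have A: "m * nrm y / (r * a) \<le> nrm (u + \<tau> *\<^sub>R w) - nrm u" using rm by linarith
    have "x + y = a *\<^sub>R (u + \<tau> *\<^sub>R w)" using a by (simp add: xu yw \<tau>_def algebra_simps)
    then have "nrm (x + y) = a * nrm (u + \<tau> *\<^sub>R w)" using a by (simp add: nb(3))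
    then have "nrm (x + y) - nrm x = a * (nrm (u + \<tau> *\<^sub>R w) - nrm u)" by (simp add: nu algebra_simps)
    moreover have "a * (m * nrm y / (r * a)) = m / r * nrm y" using a by simp
    ultimately show "m / r * nrm y \<le> nrm (x + y) - nrm x"
      using A a by (metis mult_left_mono less_imp_le)
  qed
qed


theorem lemma6p4:
  fixes nrm :: "real ^ 'n \<Rightarrow> real" and N :: "real ^ 'n \<Rightarrow> real ^ 'n"
  assumes sc: "strictly_convex_norm nrm"
    and grad: "\<And>x. x \<noteq> 0 \<Longrightarrow> (nrm has_derivative (\<lambda>v. inner v (N x))) (at x)"
    and cont: "continuous_on (UNIV - {0}) N"
  shows "((\<exists>T r. T > 0 \<and> r > 0 \<and>
            (\<forall>x y. x \<noteq> 0 \<and> nrm y \<le> r * nrm x \<and> inner y (N x) = 0 \<longrightarrow>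
               hfun nrm N x (x + 2 *\<^sub>R y) \<le> T * hfun nrm N x (x + y)))
         \<longrightarrow> (\<exists>T'. \<forall>x y. x \<noteq> 0 \<and> inner y (N x) = 0 \<longrightarrow>
               hfun nrm N x (x + 2 *\<^sub>R y) \<le> T' * hfun nrm N x (x + y)))
     \<and> ((\<exists>r K. r > 0 \<and> K > 0 \<and>
            (\<forall>x y. x \<noteq> 0 \<and> nrm y \<le> r * nrm x \<and> inner y (N x) = 0 \<longrightarrow>
               hfun nrm N x (x + y) \<le> K * hfun nrm N x (x - y)))
         \<longrightarrow> (\<exists>K'. \<forall>x y. x \<noteq> 0 \<and> inner y (N x) = 0 \<longrightarrow>
               hfun nrm N x (x + y) \<le> K' * hfun nrm N x (x - y)))"
proof -
  have n: "is_norm nrm" using sc by (simp add: strictly_convex_norm_def)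
  note nb = nrm_basic[OF n]
  have sg: "nrm x + inner v (N x) \<le> nrm (x + v)" if "x \<noteq> 0" for x v
    by (rule subgrad[OF n grad[OF that]])
  have eu: "inner x (N x) = nrm x" if x: "x \<noteq> 0" for x
  proof -
    have "nrm x + inner (- x) (N x) \<le> nrm (x + - x)" by (rule sg[OF x])
    then have 1: "nrm x \<le> inner x (N x)" using nb(2)[of 0] by simp
    have "nrm x + inner x (N x) \<le> nrm (x + x)" by (rule sg[OF x])
    also have "x + x = 2 *\<^sub>R x" by (simp add: scaleR_2)
    finally have "inner x (N x) \<le> nrm x" by (simp add: nb(3))
    with 1 show ?thesis by simp
  qed
  have hf: "hfun nrm N x (x + c *\<^sub>R y) = nrm (x + c *\<^sub>R y) - nrm x"
    if "x \<noteq> 0" "inner y (N x) = 0" for x y c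
    using that eu[OF that(1)] by (simp add: hfun_def inner_add_left)
  have tan: "\<forall>t. nrm x \<le> nrm (x + t *\<^sub>R y)" if "x \<noteq> 0" "inner y (N x) = 0" for x y
    using sg[OF that(1)] that(2) by (metis add.right_neutral inner_scaleR_left mult_zero_right)
  have hpos: "0 \<le> nrm (x + y) - nrm x" if "x \<noteq> 0" "inner y (N x) = 0" for x y
    using sg[OF that(1), of y] that(2) by simp
  have P1: "\<exists>T'. \<forall>x y. x \<noteq> 0 \<and> inner y (N x) = 0 \<longrightarrow>
               hfun nrm N x (x + 2 *\<^sub>R y) \<le> T' * hfun nrm N x (x + y)"
    if "T > 0" "r > 0" and HT: "\<forall>x y. x \<noteq> 0 \<and> nrm y \<le> r * nrm x \<and> inner y (N x) = 0 \<longrightarrow>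
               hfun nrm N x (x + 2 *\<^sub>R y) \<le> T * hfun nrm N x (x + y)" for T r
  proof -
    obtain c where c: "c > 0" and kc: "\<And>x y. x \<noteq> 0 \<and> (\<forall>t. nrm x \<le> nrm (x + t *\<^sub>R y)) \<and> r * nrm x < nrm y
            \<Longrightarrow> c * nrm y \<le> nrm (x + y) - nrm x" using key[OF sc \<open>r > 0\<close>] by blast
    show ?thesis
    proof (intro exI[of _ "max T (2/c)"] allI impI)
      fix x y assume H: "x \<noteq> 0 \<and> inner y (N x) = 0"
      have h1: "hfun nrm N x (x + y) = nrm (x + y) - nrm x" using hf[of x y 1] H by simp
      have h2: "hfun nrm N x (x + 2 *\<^sub>R y) = nrm (x + 2 *\<^sub>R y) - nrm x" using hf[of x y 2] H by simp
      have h1p: "0 \<le> hfun nrm N x (x + y)" using h1 hpos H by simp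
      show "hfun nrm N x (x + 2 *\<^sub>R y) \<le> max T (2/c) * hfun nrm N x (x + y)"
      proof (cases "nrm y \<le> r * nrm x")
        case True
        then have "hfun nrm N x (x + 2 *\<^sub>R y) \<le> T * hfun nrm N x (x + y)" using HT H by blast
        also have "\<dots> \<le> max T (2/c) * hfun nrm N x (x + y)" using h1p by (intro mult_right_mono) auto
        finally show ?thesis .
      next
        case False
        have "c * nrm y \<le> hfun nrm N x (x + y)" using kc[of x y] H False tan[of x y] h1 by auto
        then have "2 * nrm y \<le> (2/c) * hfun nrm N x (x + y)" using c by (simp add: field_simps)
        moreover have "hfun nrm N x (x + 2 *\<^sub>R y) \<le> 2 * nrm y"
          using h2 nb(4)[of x "2 *\<^sub>R y"] nb(3)[of 2 y] by simp
        moreover have "(2/c) * hfun nrm N x (x + y) \<le> max T (2/c) * hfun nrm N x (x + y)"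
          using h1p by (intro mult_right_mono) auto
        ultimately show ?thesis by linarith
      qed
    qed
  qed
  have P2: "\<exists>K'. \<forall>x y. x \<noteq> 0 \<and> inner y (N x) = 0 \<longrightarrow>
               hfun nrm N x (x + y) \<le> K' * hfun nrm N x (x - y)"
    if "r > 0" "K > 0" and HK: "\<forall>x y. x \<noteq> 0 \<and> nrm y \<le> r * nrm x \<and> inner y (N x) = 0 \<longrightarrow>
               hfun nrm N x (x + y) \<le> K * hfun nrm N x (x - y)" for K r
  proof -
    obtain c where c: "c > 0" and kc: "\<And>x y. x \<noteq> 0 \<and> (\<forall>t. nrm x \<le> nrm (x + t *\<^sub>R y)) \<and> r * nrm x < nrm y
            \<Longrightarrow> c * nrm y \<le> nrm (x + y) - nrm x" using key[OF sc \<open>r > 0\<close>] by blast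
    show ?thesis
    proof (intro exI[of _ "max K (1/c)"] allI impI)
      fix x y assume H: "x \<noteq> 0 \<and> inner y (N x) = 0"
      have H': "inner (- y) (N x) = 0" using H by simp
      have h1: "hfun nrm N x (x + y) = nrm (x + y) - nrm x" using hf[of x y 1] H by simp
      have h2: "hfun nrm N x (x - y) = nrm (x + - y) - nrm x" using hf[of x "- y" 1] H by simp
      have h2p: "0 \<le> hfun nrm N x (x - y)" using h2 hpos[of x "- y"] H H' by simp
      show "hfun nrm N x (x + y) \<le> max K (1/c) * hfun nrm N x (x - y)"
      proof (cases "nrm y \<le> r * nrm x")
        case True
        then have "hfun nrm N x (x + y) \<le> K * hfun nrm N x (x - y)" using HK H by blast
        also have "\<dots> \<le> max K (1/c) * hfun nrm N x (x - y)" using h2p by (intro mult_right_mono) auto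
        finally show ?thesis .
      next
        case False
        have "c * nrm (- y) \<le> hfun nrm N x (x - y)"
          using kc[of x "- y"] H H' False tan[of x "- y"] h2 nrm_minus[OF n, of y] by auto
        then have "nrm y \<le> (1/c) * hfun nrm N x (x - y)" using c nrm_minus[OF n, of y]
          by (simp add: field_simps)
        moreover have "hfun nrm N x (x + y) \<le> nrm y"
          using h1 nb(4)[of x y] by simp
        moreover have "(1/c) * hfun nrm N x (x - y) \<le> max K (1/c) * hfun nrm N x (x - y)"
          using h2p by (intro mult_right_mono) auto
        ultimately show ?thesis by linarith
      qed
    qed
  qed
  show ?thesis using P1 P2 by blast
qed

end
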